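(* Consider rational $c$ for which $f_c(x)=x^2+c$ has a rational $3$-cycle $\{x_1,x_2,x_3\}$ (elements written in lowest terms). (a) Some $x_i$ has numerator equal to one of $\pm11,\pm17,\pm25$ if and only if $c=-\tfrac{421}{144}$. (b) Some $x_i$ has numerator $\pm19$ if and only if $c\in\{-\tfrac{301}{144},\,-\tfrac{337\cdot673}{360^2}\}$. (c) Some $x_i$ has numerator $\pm23$ if and only if $c\in\{-\tfrac{301}{144},\,-\tfrac{43^2}{24^2}\}$.
   Context: A rational $3$-cycle of $f_c$ is the orbit of a rational point of minimal period $3$. Standing fact: $f_c$ has one iff $c=-A(m,n)/B(m,n)$ with $A(m,n)=m^6+2m^5n+4m^4n^2+8m^3n^3+9m^2n^4+4mn^5+n^6$, $B(m,n)=4m^2n^2(m+n)^2$, for coprime integers $m,n$ with $mn(m+n)\ne0$; the cycle is then $\{\frac{t_1}{2mn(m+n)},\frac{t_2}{2mn(m+n)},-\frac{t_3}{2mn(m+n)}\}$ in lowest terms, with $t_1=m^3+2m^2n+mn^2+n^3$, $t_2=m^3-mn^2-n^3$, $t_3=m^3+2m^2n+3mn^2+n^3$. *)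

theory Defs
  imports Complex_Main
begin

definition fc :: "rat \<Rightarrow> rat \<Rightarrow> rat" where
  "fc c x = x ^ 2 + c"

definition period3_pt :: "rat \<Rightarrow> rat \<Rightarrow> bool" where
  "period3_pt c x \<longleftrightarrow> (fc c ^^ 3) x = x \<and> (fc c ^^ 1) x \<noteq> x \<and> (fc c ^^ 2) x \<noteq> x"

definition orbit3 :: "rat \<Rightarrow> rat \<Rightarrow> rat set" where
  "orbit3 c x = {x, fc c x, fc c (fc c x)}"

text \<open>Numerator of a rational in lowest terms (denominator positive).\<close>
definition numer :: "rat \<Rightarrow> int" where
  "numer q = fst (quotient_of q)"

definition cycle_numer_in :: "rat \<Rightarrow> int set \<Rightarrow> bool" where
  "cycle_numer_in c S \<longleftrightarrow> (\<exists>x. period3_pt c x \<and> (\<exists>y\<in>orbit3 c x. numer y \<in> S))"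

end

theory Submission
  imports Defs "HOL-Number_Theory.Cong" "HOL-Computational_Algebra.Primes"
begin


lemma fc3: "(fc c ^^ 3) x = fc c (fc c (fc c x))" by (simp add: numeral_3_eq_3)
lemma fc2: "(fc c ^^ 2) x = fc c (fc c x)" by (simp add: numeral_2_eq_2)

lemma per3_iff: "period3_pt c x \<longleftrightarrow> fc c (fc c (fc c x)) = x \<and> fc c x \<noteq> x \<and> fc c (fc c x) \<noteq> x"
  by (simp add: period3_pt_def fc3 fc2)

lemma per3_orbit: "period3_pt c x \<Longrightarrow> y \<in> orbit3 c x \<Longrightarrow> period3_pt c y"
  unfolding per3_iff orbit3_def by (auto; metis)

lemma param:
  fixes c x :: rat
  assumes p: "period3_pt c x"
  defines "t \<equiv> x + fc c x"
  shows "t \<noteq> 0 \<and> t \<noteq> -1 \<and> x = (t^3+2*t^2+t+1)/(2*t*(t+1))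
      \<and> c = - (t^6+2*t^5+4*t^4+8*t^3+9*t^2+4*t+1)/(4*t^2*(t+1)^2)"
proof -
  define x1 where "x1 = x"
  define x2 where "x2 = fc c x1"
  define x3 where "x3 = fc c x2"
  have e2: "x2 = x1^2 + c" and e3: "x3 = x2^2 + c" and e1: "x1 = x3^2 + c"
    using p unfolding x2_def x3_def x1_def per3_iff fc_def by auto
  have d12: "x1 \<noteq> x2" and d13: "x1 \<noteq> x3" using p unfolding x2_def x3_def x1_def per3_iff by auto
  have d23: "x2 \<noteq> x3" using p unfolding x2_def x3_def x1_def per3_iff by metis
  have t: "t = x1 + x2" unfolding t_def x1_def x2_def by simp
  have h1: "x3 - x2 = (x2 - x1) * t" using e2 e3 t by (simp add: algebra_simps power2_eq_square)
  have h2: "x1 - x3 = (x3 - x2) * (x2 + x3)" using e1 e2 e3 by (simp add: algebra_simps power2_eq_square)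
  have t0: "t \<noteq> 0" using h1 d23 by auto
  have "(x1 - x2) * (1 + t) = (x1 - x2) * (- t * (x2 + x3))"
  proof -
    have "x1 - x3 = (x1 - x2) * (1 + t)" using h1 by (simp add: algebra_simps)
    moreover have "x1 - x3 = ((x2 - x1) * t) * (x2 + x3)" using h1 h2 by simp
    then have "x1 - x3 = (x1 - x2) * (- t * (x2 + x3))" by (simp add: algebra_simps)
    ultimately show ?thesis by simp
  qed
  then have "(x1 - x2) * ((1 + t) - (- t * (x2 + x3))) = 0" by (simp only: right_diff_distrib)
  then have h3: "1 + t = - t * (x2 + x3)" using d12 by simp
  have t1: "t \<noteq> -1"
  proof
    assume "t = -1"
    then have "x2 + x3 = 0" using h3 by simp
    then show False using h2 d13 by simp
  qed
  have x2t: "x2 = t - x1" using t by simp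
  have x3t: "x3 = x2 + (x2 - x1) * t" using h1 by simp
  have "1 + t = - t * (2*t - 2*x1 + (t - 2*x1)*t)" using h3 x2t x3t by (simp add: algebra_simps)
  then have "2 * x1 * t * (t + 1) = t^3 + 2*t^2 + t + 1" by (simp add: algebra_simps power2_eq_square power3_eq_cube)
  moreover have "2 * t * (t + 1) \<noteq> 0" using t0 t1 by (simp add: add_eq_0_iff)
  ultimately have X: "x1 = (t^3+2*t^2+t+1)/(2*t*(t+1))" by (simp add: field_simps)
  have "c = x2 - x1^2" using e2 by simp
  then have "c = t - x1 - x1^2" using x2t by simp
  also have "\<dots> = - (t^6+2*t^5+4*t^4+8*t^3+9*t^2+4*t+1)/(4*t^2*(t+1)^2)"
  proof -
    define N where "N = t^3+2*t^2+t+1"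
    define D where "D = 2*t*(t+1)"
    have D0: "D \<noteq> 0" unfolding D_def using t0 t1 by (simp add: add_eq_0_iff)
    have poly: "t*D^2 - N*D - N^2 = - (t^6+2*t^5+4*t^4+8*t^3+9*t^2+4*t+1)"
      unfolding N_def D_def by algebra
    have DD: "D^2 = 4*t^2*(t+1)^2" unfolding D_def by (simp add: power_mult_distrib)
    have "t - N/D - (N/D)^2 = (t*D^2 - N*D - N^2)/D^2" using D0 by (simp add: field_simps power2_eq_square)
    also have "\<dots> = - (t^6+2*t^5+4*t^4+8*t^3+9*t^2+4*t+1)/(4*t^2*(t+1)^2)" by (subst poly) (simp only: DD)
    finally show ?thesis unfolding X N_def[symmetric] D_def[symmetric] .
  qed
  finally show ?thesis using t0 t1 X x1_def by simp
qed


definition FF :: "int \<Rightarrow> int \<Rightarrow> int" where "FF m n = m^3 + 2*m^2*n + m*n^2 + n^3"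

lemma numer_frac:
  assumes "B \<noteq> 0" "coprime A B"
  shows "numer (of_int A / of_int B) = A \<or> numer (of_int A / of_int B) = - A"
proof -
  have g: "gcd A B = 1" using assms(2) by simp
  have "quotient_of (of_int A / of_int B) = Rat.normalize (A, B)"
    by (simp add: Fract_of_int_quotient[symmetric] quotient_of_Fract)
  then show ?thesis using assms(1) g unfolding numer_def by (auto simp: Rat.normalize_def Let_def)
qed

lemma cop_helper: "coprime a m \<Longrightarrow> coprime (a + m*k) (m::int)"
proof -
  assume "coprime a m"
  then have "gcd m a = 1" by (simp add: coprime_iff_gcd_eq_1 gcd.commute)
  then have "gcd m (k * m + a) = 1" by (simp add: gcd_add_mult)
  then show ?thesis by (simp add: coprime_iff_gcd_eq_1 gcd.commute ac_simps)
qed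

lemma rat_formula:
  fixes u v :: rat
  assumes "v \<noteq> 0" "u \<noteq> 0" "u + v \<noteq> 0"
  shows "((u/v)^3 + 2*(u/v)^2 + u/v + 1) / (2*(u/v)*(u/v+1)) = (u^3+2*u^2*v+u*v^2+v^3)/(2*u*v*(u+v))"
proof -
  have a: "(u/v)^3 + 2*(u/v)^2 + u/v + 1 = (u^3+2*u^2*v+u*v^2+v^3)/v^3"
    using assms by (simp add: field_simps power2_eq_square power3_eq_cube)
  have b: "2*(u/v)*(u/v+1) = (2*u*(u+v))/v^2"
    using assms by (simp add: field_simps power2_eq_square)
  have nz1: "(2*u*(u+v))/v^2 \<noteq> 0" "2*u*v*(u+v) \<noteq> 0" using assms by auto
  show ?thesis unfolding a b
    by (subst frac_eq_eq[OF nz1]) (use assms in \<open>simp add: field_simps power2_eq_square power3_eq_cube\<close>)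
qed

lemma FF_coprime:
  assumes "coprime m n"
  shows "coprime (FF m n) (2*m*n*(m+n))"
proof -
  have o: "odd (FF m n)"
  proof -
    have "\<not> (even m \<and> even n)" using assms by (metis coprime_common_divisor dvd_refl odd_one)
    then show ?thesis unfolding FF_def by (auto simp: even_mult_iff even_add even_power)
  qed
  have c2: "coprime (FF m n) 2" using o by (simp add: coprime_commute)
  have cm: "coprime (FF m n) m"
  proof -
    have "FF m n = n^3 + m*(m^2 + 2*m*n + n^2)" unfolding FF_def by (simp add: algebra_simps power2_eq_square power3_eq_cube)
    moreover have "coprime (n^3) m" using assms by (simp add: coprime_commute)
    ultimately show ?thesis by (simp add: cop_helper)
  qed
  have cn: "coprime (FF m n) n"
  proof -
    have "FF m n = m^3 + n*(2*m^2 + m*n + n^2)" unfolding FF_def by (simp add: algebra_simps power2_eq_square power3_eq_cube)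
    moreover have "coprime (m^3) n" using assms by simp
    ultimately show ?thesis by (simp add: cop_helper)
  qed
  have cmn: "coprime (FF m n) (m+n)"
  proof -
    have "FF m n = n^3 + (m+n)*(m^2 + m*n)" unfolding FF_def by (simp add: algebra_simps power2_eq_square power3_eq_cube)
    moreover have "coprime (m + n*1) n" by (rule cop_helper) (use assms in simp)
    then have "coprime n (m+n)" by (simp add: coprime_commute)
    then have "coprime (n^3) (m+n)" by simp
    ultimately show ?thesis by (simp add: cop_helper)
  qed
  show ?thesis using c2 cm cn cmn by simp
qed

lemma numer_param:
  fixes t x :: rat
  assumes t0: "t \<noteq> 0" and t1: "t \<noteq> -1" and x: "x = (t^3+2*t^2+t+1)/(2*t*(t+1))"
    and q: "quotient_of t = (m, n)"
  shows "(numer x = FF m n \<or> numer x = - FF m n) \<and> t = of_int m / of_int n"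
proof -
  have tq: "t = of_int m / of_int n" using q by (rule quotient_of_div)
  have n0: "n > 0" using q by (rule quotient_of_denom_pos)
  have cp: "coprime m n" using q by (rule quotient_of_coprime)
  have m0: "m \<noteq> 0"
  proof
    assume "m = 0" then have "t = 0" using tq by simp
    then show False using t0 by simp
  qed
  have mn0: "m + n \<noteq> 0"
  proof
    assume "m + n = 0"
    then have "m = - n" by simp
    then have "t = -1" using tq n0 by simp
    then show False using t1 by simp
  qed
  have nr: "rat_of_int n \<noteq> 0" using n0 by simp
  have mr: "rat_of_int m \<noteq> 0" using m0 by simp
  have mnr: "rat_of_int m + rat_of_int n \<noteq> 0"
  proof -
    have "rat_of_int (m + n) \<noteq> 0" using mn0 by (simp only: of_int_eq_0_iff) simp
    then show ?thesis by simp
  qed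
  have "x = (of_int m^3+2*of_int m^2*of_int n+of_int m*of_int n^2+of_int n^3)/(2*of_int m*of_int n*(of_int m+of_int n))"
    unfolding x tq by (rule rat_formula[OF nr mr mnr])
  then have xeq: "x = of_int (FF m n) / of_int (2*m*n*(m+n))" unfolding FF_def by simp
  have nz: "2*m*n*(m+n) \<noteq> 0" using m0 n0 mn0 by simp
  have "numer x = FF m n \<or> numer x = - FF m n"
    unfolding xeq by (rule numer_frac[OF nz FF_coprime[OF cp]])
  then show ?thesis using tq by simp
qed


datatype zr = Z int int int

fun c0 :: "zr \<Rightarrow> int" where "c0 (Z a b c) = a"
fun c1 :: "zr \<Rightarrow> int" where "c1 (Z a b c) = b"
fun c2 :: "zr \<Rightarrow> int" where "c2 (Z a b c) = c"

lemma zr_eq_iff: "x = y \<longleftrightarrow> c0 x = c0 y \<and> c1 x = c1 y \<and> c2 x = c2 y"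
  by (cases x; cases y) auto

instantiation zr :: comm_ring_1
begin
fun plus_zr where "plus_zr (Z a b c) (Z d e f) = Z (a+d) (b+e) (c+f)"
fun minus_zr where "minus_zr (Z a b c) (Z d e f) = Z (a-d) (b-e) (c-f)"
fun uminus_zr where "uminus_zr (Z a b c) = Z (-a) (-b) (-c)"
definition zero_zr where "zero_zr = Z 0 0 0"
definition one_zr where "one_zr = Z 1 0 0"
fun times_zr where "times_zr (Z a b c) (Z d e f) =
  Z (a*d - (b*f+c*e) + 2*(c*f)) (a*e+b*d - (b*f+c*e) + c*f) (a*f+b*e+c*d - 2*(b*f+c*e) + 3*(c*f))"
instance
proof
  fix x y z :: zr
  show "x * y * z = x * (y * z)"
    by (cases x; cases y; cases z) (simp add: algebra_simps)
  show "x * y = y * x" by (cases x; cases y) (simp add: algebra_simps)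
  show "1 * x = x" by (cases x) (simp add: one_zr_def)
  show "(x + y) * z = x * z + y * z" by (cases x; cases y; cases z) (simp add: algebra_simps)
  show "x + y + z = x + (y + z)" by (cases x; cases y; cases z) simp
  show "x + y = y + x" by (cases x; cases y) simp
  show "0 + x = x" by (cases x) (simp add: zero_zr_def)
  show "- x + x = 0" by (cases x) (simp add: zero_zr_def)
  show "x - y = x + - y" by (cases x; cases y) simp
  show "(0::zr) \<noteq> 1" by (simp add: zero_zr_def one_zr_def)
qed
end

lemma zr_of_int: "(of_int k :: zr) = Z k 0 0"
proof (induct k rule: int_induct[where k=0])
  case base then show ?case by (simp add: zero_zr_def)
next
  case (step1 i) then show ?case by (simp add: one_zr_def)
next
  case (step2 i) then show ?case by (simp add: one_zr_def)
qed

definition nrm :: "zr \<Rightarrow> int" where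
 "nrm x = (case x of Z a b c \<Rightarrow> a^3 - 2*a^2*b + 2*a^2*c + a*b^2 + a*b*c - 3*a*c^2 - b^3 + 2*b^2*c - b*c^2 + c^3)"

definition rho :: zr where "rho = Z 0 1 1"
definition rhoi :: zr where "rhoi = Z (-1) (-1) 0"
lemma rho_rhoi: "rho * rhoi = 1" by (simp add: rho_def rhoi_def one_zr_def)

lemma nrm_rho: "nrm (x * rho) = nrm x" by (cases x) (simp add: nrm_def rho_def algebra_simps power2_eq_square power3_eq_cube)
lemma nrm_rhoi: "nrm (x * rhoi) = nrm x" by (cases x) (simp add: nrm_def rhoi_def algebra_simps power2_eq_square power3_eq_cube)



lemma three_pow: "1 \<le> f \<Longrightarrow> f + 2 \<le> (3::nat) ^ f"
proof (induct f)
  case 0 then show ?case by simp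
next
  case (Suc f) then show ?case by (cases "f = 0") auto
qed

lemma binom_val:
  fixes p n i :: nat
  assumes p: "prime p" "p \<ge> 3" and i: "2 \<le> i" "i \<le> n"
  shows "p ^ (multiplicity p n + 2) dvd (n choose i) * p ^ i"
proof -
  define e where "e = multiplicity p n"
  define f where "f = multiplicity p i"
  have nu: "\<not> is_unit p" using p by auto
  have i0: "i \<noteq> 0" using i by auto
  obtain i' where i': "i = p ^ f * i'" "\<not> p dvd i'"
    using multiplicity_decompose'[OF i0 nu] f_def by metis
  have "p ^ e dvd n" unfolding e_def by (rule multiplicity_dvd)
  moreover have "i * (n choose i) = n * ((n - 1) choose (i - 1))"
    using times_binomial_minus1_eq[of i n] i by simp
  ultimately have "p ^ e dvd i * (n choose i)" by simp
  hence A: "p ^ e dvd p ^ f * ((n choose i) * i')" using i' by (simp add: ac_simps)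
  have pf_le: "p ^ f \<le> i" using i' i0 by (metis dvd_imp_le dvd_triv_left neq0_conv)
  have fi: "f + 2 \<le> i"
  proof (cases "f = 0")
    case True then show ?thesis using i by simp
  next
    case False
    have "f + 2 \<le> 3 ^ f" using three_pow False by simp
    also have "(3::nat) ^ f \<le> p ^ f" using p by (simp add: power_mono)
    finally show ?thesis using pf_le by simp
  qed
  show ?thesis
  proof (cases "e \<le> f")
    case True
    have "p ^ (e + 2) dvd p ^ i" using fi True by (intro le_imp_power_dvd) simp
    then show ?thesis unfolding e_def by simp
  next
    case False
    have "p ^ e = p ^ f * p ^ (e - f)" using False by (simp add: power_add[symmetric])
    with A have "p ^ f * p ^ (e - f) dvd p ^ f * ((n choose i) * i')" by simp
    hence "p ^ (e - f) dvd (n choose i) * i'" using p by (simp add: prime_gt_0_nat)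
    moreover have "coprime (p ^ (e - f)) i'"
      using i'(2) p(1) by (simp add: prime_imp_coprime)
    ultimately have B: "p ^ (e - f) dvd (n choose i)"
      using coprime_dvd_mult_left_iff by blast
    have "p ^ (e - f) * p ^ i = p ^ (e - f + i)" by (simp add: power_add)
    moreover have "p ^ (e + 2) dvd p ^ (e - f + i)" using fi False by (intro le_imp_power_dvd) simp
    ultimately have "p ^ (e + 2) dvd p ^ (e - f) * p ^ i" by simp
    also have "\<dots> dvd (n choose i) * p ^ i" using B by simp
    finally show ?thesis unfolding e_def .
  qed
qed

lemma c2_add[simp]: "c2 (x + y) = c2 x + c2 y" by (cases x; cases y) simp
lemma c2_diff[simp]: "c2 (x - y) = c2 x - c2 y" by (cases x; cases y) simp
lemma c2_one[simp]: "c2 1 = 0" by (simp add: one_zr_def)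
lemma c2_zero[simp]: "c2 0 = 0" by (simp add: zero_zr_def)
lemma c2_of_int_mult[simp]: "c2 (of_int k * x) = k * c2 x" by (cases x) (simp add: zr_of_int)
lemma c2_of_nat_mult[simp]: "c2 (of_nat k * x) = int k * c2 x"
  using c2_of_int_mult[of "int k" x] by simp
lemma c2_mult_of_nat[simp]: "c2 (x * of_nat k) = int k * c2 x"
  by (subst mult.commute) (rule c2_of_nat_mult)
lemma c2_mult_of_nat2[simp]: "c2 (x * (y * of_nat k)) = int k * c2 (x * y)"
  by (subst mult.assoc[symmetric]) (rule c2_mult_of_nat)
lemma c2_mult_of_nat3[simp]: "c2 (x * (of_nat k * y)) = int k * c2 (x * y)"
  by (subst mult.left_commute) (rule c2_of_nat_mult)
lemma c2_sum: "c2 (sum g A) = (\<Sum>a\<in>A. c2 (g a))"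
  by (induct A rule: infinite_finite_induct) auto

lemma cong_pow: "\<exists>w. (1 + of_nat p * d :: zr) ^ n = 1 + of_nat p * w"
proof (induct n)
  case 0 show ?case by (rule exI[of _ 0]) simp
next
  case (Suc n)
  then obtain w where "(1 + of_nat p * d :: zr) ^ n = 1 + of_nat p * w" by blast
  then show ?case
    by (intro exI[of _ "w + d + of_nat p * w * d"]) (simp add: algebra_simps)
qed

lemma cong_c2: "c2 (v * (1 + of_nat p * d) ^ n) mod int p = c2 v mod int p"
proof -
  obtain w where "(1 + of_nat p * d :: zr) ^ n = 1 + of_nat p * w" using cong_pow by blast
  then have "c2 (v * (1 + of_nat p * d) ^ n) = c2 v + int p * c2 (v * w)"
    by (simp add: algebra_simps)
  then show ?thesis by simp
qed

lemma skolem: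
  fixes p n :: nat
  assumes p: "prime p" "p \<ge> 3" and v: "c2 v = 0" and d: "\<not> int p dvd c2 (v * d)" and n: "n \<ge> 1"
  shows "c2 (v * (1 + of_nat p * d) ^ n) \<noteq> 0"
proof
  assume H: "c2 (v * (1 + of_nat p * d) ^ n) = 0"
  define T where "T i = int ((n choose i) * p ^ i) * c2 (v * d ^ i)" for i
  have "(1 + of_nat p * d :: zr) ^ n = (of_nat p * d + 1) ^ n" by (simp add: add.commute)
  also have "\<dots> = (\<Sum>i\<le>n. of_nat (n choose i) * (of_nat p * d) ^ i)"
    by (simp add: binomial_ring)
  finally have "c2 (v * (1 + of_nat p * d) ^ n) = (\<Sum>i\<le>n. T i)"
    by (simp add: sum_distrib_left c2_sum T_def power_mult_distrib mult.assoc
        of_nat_power[symmetric] del: of_nat_power)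
  with H have S: "(\<Sum>i\<le>n. T i) = 0" by simp
  have split: "{..n} = {0, 1} \<union> {2..n}" using n by auto
  have "(\<Sum>i\<le>n. T i) = T 0 + T 1 + (\<Sum>i\<in>{2..n}. T i)"
    unfolding split by (subst sum.union_disjoint) auto
  moreover have "T 0 = 0" using v by (simp add: T_def)
  ultimately have E: "T 1 = - (\<Sum>i\<in>{2..n}. T i)" using S by simp
  define e where "e = multiplicity p n"
  have "int p ^ (e + 2) dvd (\<Sum>i\<in>{2..n}. T i)"
  proof (rule dvd_sum)
    fix i assume "i \<in> {2..n}"
    then have "p ^ (e + 2) dvd (n choose i) * p ^ i" unfolding e_def using binom_val[OF p] by auto
    then have "int (p ^ (e + 2)) dvd int ((n choose i) * p ^ i)" using int_dvd_int_iff by blast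
    then show "int p ^ (e + 2) dvd T i" unfolding T_def by simp
  qed
  with E have D: "int p ^ (e + 2) dvd T 1" by simp
  have nu: "\<not> is_unit p" using p by auto
  obtain n' where n': "n = p ^ e * n'" "\<not> p dvd n'"
    using multiplicity_decompose'[of n p] nu n e_def by (metis not_one_le_zero)
  have "T 1 = int p ^ (e + 1) * (int n' * c2 (v * d))" unfolding T_def using n' by simp
  with D have "int p ^ (e + 1) * int p dvd int p ^ (e + 1) * (int n' * c2 (v * d))" by simp
  hence "int p dvd int n' * c2 (v * d)" using p by (simp add: prime_gt_0_nat)
  moreover have "prime (int p)" using p by simp
  ultimately have "int p dvd int n' \<or> int p dvd c2 (v * d)" by (simp add: prime_dvd_mult_iff)
  with n' d show False by (simp add: int_dvd_int_iff)
qed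


definition zpow :: "int \<Rightarrow> zr" where
  "zpow j = (if 0 \<le> j then rho ^ nat j else rhoi ^ nat (- j))"

lemma zpow_succ: "zpow (j + 1) = zpow j * rho"
proof (cases "0 \<le> j")
  case True
  then have "nat (j + 1) = Suc (nat j)" by simp
  then show ?thesis using True by (simp add: zpow_def mult.commute)
next
  case False
  have a: "zpow j = rhoi ^ nat (- (j + 1)) * rhoi"
    using False by (simp add: zpow_def power_Suc2[symmetric] Suc_nat_eq_nat_zadd1)
  have b: "zpow (j + 1) = rhoi ^ nat (- (j + 1))"
    using False by (cases "j = -1") (auto simp add: zpow_def)
  show ?thesis using a b by (simp add: mult.assoc mult.commute[of rhoi rho] rho_rhoi)
qed

lemma zpow_pred: "zpow (j - 1) = zpow j * rhoi"
proof -
  have "zpow j = zpow (j - 1) * rho" using zpow_succ[of "j - 1"] by simp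
  then have "zpow j * rhoi = zpow (j - 1) * (rho * rhoi)" by (simp add: mult.assoc)
  then show ?thesis by (simp add: rho_rhoi)
qed

lemma zpow_add: "zpow (i + j) = zpow i * zpow j"
proof (induct i rule: int_induct[where k=0])
  case base then show ?case by (simp add: zpow_def)
next
  case (step1 i)
  have "zpow (i + 1 + j) = zpow (i + j + 1)" by (simp add: ac_simps)
  also have "\<dots> = zpow (i + j) * rho" by (rule zpow_succ)
  also have "\<dots> = zpow i * rho * zpow j" using step1 by (simp add: ac_simps)
  finally show ?case by (simp add: zpow_succ)
next
  case (step2 i)
  have "zpow (i - 1 + j) = zpow (i + j - 1)" by (rule arg_cong[where f=zpow]) simp
  also have "\<dots> = zpow (i + j) * rhoi" by (rule zpow_pred)
  also have "\<dots> = zpow i * rhoi * zpow j" using step2 by (simp add: ac_simps)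
  finally show ?case by (simp add: zpow_pred)
qed

lemma zpow_nat: "zpow (int i) = rho ^ i" by (simp add: zpow_def)

lemma zpow_mult_pos: "0 \<le> t \<Longrightarrow> zpow (int P * t) = (rho ^ P) ^ nat t"
  by (simp add: zpow_def nat_mult_distrib power_mult)
lemma zpow_mult_neg: "t < 0 \<Longrightarrow> zpow (int P * t) = (rhoi ^ P) ^ nat (- t)"
proof (cases "P = 0")
  case True then show ?thesis by (simp add: zpow_def)
next
  case False
  assume "t < 0"
  then have "int P * t < 0" using False by (intro mult_pos_neg) auto
  then have "\<not> 0 \<le> int P * t" by simp
  moreover have "nat (- (int P * t)) = P * nat (- t)"
  proof -
    have "- (int P * t) = int P * (- t)" by simp
    then show ?thesis by (simp only: nat_mult_distrib) simp
  qed
  ultimately show ?thesis by (simp add: zpow_def power_mult)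
qed

definition modz :: "int \<Rightarrow> zr \<Rightarrow> zr" where
  "modz q x = Z (c0 x mod q) (c1 x mod q) (c2 x mod q)"

lemma modz_mult_left: "modz q (modz q x * y) = modz q (x * y)"
proof -
  have b: "[(a::int) mod q = a] (mod q)" for a by (simp add: cong_def)
  show ?thesis
    by (cases x; cases y) (simp add: modz_def flip: cong_def; intro conjI cong_add cong_diff cong_mult cong_refl b)
qed

fun pows :: "int \<Rightarrow> zr \<Rightarrow> nat \<Rightarrow> zr list" where
  "pows q x 0 = []"
| "pows q x (Suc n) = x # pows q (modz q (x * rho)) n"

lemma length_pows[simp]: "length (pows q x n) = n" by (induct n arbitrary: x) auto

lemma pows_nth: "i < n \<Longrightarrow> pows q (modz q g) n ! i = modz q (g * rho ^ i)"
proof (induct n arbitrary: g i)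
  case 0 then show ?case by simp
next
  case (Suc n)
  show ?case
  proof (cases i)
    case 0 then show ?thesis by simp
  next
    case (Suc k)
    with Suc.prems have "k < n" by simp
    have "pows q (modz q g) (Suc n) ! i = pows q (modz q (modz q g * rho)) n ! k" using Suc by simp
    also have "\<dots> = pows q (modz q (g * rho)) n ! k" by (simp add: modz_mult_left)
    also have "\<dots> = modz q (g * rho * rho ^ k)" using Suc.hyps[OF \<open>k<n\<close>] by simp
    finally show ?thesis using Suc by (simp add: mult.assoc)
  qed
qed

lemma c2_modz[simp]: "c2 (modz q x) = c2 x mod q" by (simp add: modz_def)

definition chk :: "nat \<Rightarrow> nat \<Rightarrow> nat \<Rightarrow> int list \<Rightarrow> zr \<Rightarrow> nat \<Rightarrow> bool" where
 "chk p q P zs g M = list_all (\<lambda>(i,x). c2 x mod int p \<noteq> 0 \<or> (\<exists>z\<in>set zs. z mod int P = int i mod int P) \<or> c2 x mod int q \<noteq> 0)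
     (zip [0..<M] (pows (int (p*q)) (modz (int (p*q)) g) M))"

lemma zpow_cong:
  assumes "rho ^ M = 1 + of_nat m * dM" "rhoi ^ M = 1 + of_nat m * dM'"
  shows "c2 (g * zpow (int i + int M * t)) mod int m = c2 (g * rho ^ i) mod int m"
proof (cases "0 \<le> t")
  case True
  then show ?thesis using assms
    by (simp add: zpow_add zpow_nat zpow_mult_pos mult.assoc[symmetric] cong_c2)
next
  case False
  then show ?thesis using assms
    by (simp add: zpow_add zpow_nat zpow_mult_neg mult.assoc[symmetric] cong_c2)
qed

lemma zeros_thm:
  fixes p q P M :: nat
  assumes j: "c2 (g * zpow j) = 0"
    and p: "prime p" "p \<ge> 3" and P: "P > 0" and M: "M > 0" "P dvd M"
    and rP: "rho ^ P = 1 + of_nat p * dl" "rhoi ^ P = 1 + of_nat p * dl'"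
    and rM: "rho ^ M = 1 + of_nat (p*q) * dM" "rhoi ^ M = 1 + of_nat (p*q) * dM'"
    and zs: "list_all (\<lambda>z. c2 (g * zpow z) = 0 \<and> \<not> int p dvd c2 (g * zpow z * dl)
                      \<and> \<not> int p dvd c2 (g * zpow z * dl')) zs"
    and ch: "chk p q P zs g M"
  shows "j \<in> set zs"
proof -
  define i where "i = nat (j mod int M)"
  define t where "t = j div int M"
  have jd: "j = int i + int M * t" using M unfolding i_def t_def by simp
  have iM: "i < M" using M unfolding i_def by (simp add: nat_less_iff)
  have C: "c2 (g * rho ^ i) mod int (p*q) = 0"
    using zpow_cong[OF rM, of g i t] j jd by simp
  let ?x = "pows (int (p*q)) (modz (int (p*q)) g) M ! i"
  have x: "c2 ?x = c2 (g * rho ^ i) mod int (p*q)" using pows_nth[OF iM] by simp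
  have "(i, ?x) \<in> set (zip [0..<M] (pows (int (p*q)) (modz (int (p*q)) g) M))"
    using iM by (auto simp: in_set_zip intro!: exI[of _ i])
  then have H: "c2 ?x mod int p \<noteq> 0 \<or> (\<exists>z\<in>set zs. z mod int P = int i mod int P) \<or> c2 ?x mod int q \<noteq> 0"
    using ch unfolding chk_def list_all_iff by fastforce
  have x0: "c2 ?x = 0" using x C by simp
  then obtain z where z: "z \<in> set zs" "z mod int P = int i mod int P" using H by auto
  have ii: "int i = j mod int M" using M unfolding i_def by simp
  have "int P dvd int M" using M(2) by simp
  then have "int i mod int P = j mod int P" unfolding ii by (rule mod_mod_cancel)
  with z have "z mod int P = j mod int P" by simp
  then obtain s where s: "j = z + int P * s"
    by (metis mod_eqE add.commute mult.commute)
  have zz: "c2 (g * zpow z) = 0" "\<not> int p dvd c2 (g * zpow z * dl)" "\<not> int p dvd c2 (g * zpow z * dl')"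
    using zs z(1) unfolding list_all_iff by auto
  show ?thesis
  proof (cases "s = 0")
    case True then show ?thesis using s z by simp
  next
    case False
    show ?thesis
    proof (cases "0 \<le> s")
      case True
      with False have "nat s \<ge> 1" by simp
      have "c2 (g * zpow z * (1 + of_nat p * dl) ^ nat s) \<noteq> 0"
        by (rule skolem[OF p zz(1)[unfolded mult.assoc[symmetric]] ]) (use zz \<open>nat s \<ge> 1\<close> in auto)
      moreover have "g * zpow j = g * zpow z * (1 + of_nat p * dl) ^ nat s"
        using s True rP by (simp add: zpow_add zpow_mult_pos mult.assoc)
      ultimately show ?thesis using j by simp
    next
      case False
      then have "nat (- s) \<ge> 1" by simp
      have "c2 (g * zpow z * (1 + of_nat p * dl') ^ nat (- s)) \<noteq> 0"
        by (rule skolem[OF p]) (use zz \<open>nat (-s) \<ge> 1\<close> in auto)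
      moreover have "g * zpow j = g * zpow z * (1 + of_nat p * dl') ^ nat (- s)"
        using s False rP by (simp add: zpow_add zpow_mult_neg mult.assoc)
      ultimately show ?thesis using j by simp
    qed
  qed
qed


lemma zeros_11: "c2 (Z (3) (1) (0) * zpow j) = 0 \<Longrightarrow> j \<in> set [(0)]"
  by (rule zeros_thm[where p=5 and q=11 and P=24 and M=120 and dl="Z (30) (13) (53)" and dl'="Z (-5) (-8) (-3)"
     and dM="Z (1453593716775) (625277450215) (2550879149365)" and dM'="Z (-222400) (233035) (205010)"]) (assumption | code_simp)+

lemma zeros_17: "c2 (Z (2) (-3) (-2) * zpow j) = 0 \<Longrightarrow> j \<in> set [(5)]"
  by (rule zeros_thm[where p=5 and q=7 and P=24 and M=48 and dl="Z (30) (13) (53)" and dl'="Z (-5) (-8) (-3)"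
     and dM="Z (3680) (1583) (6458)" and dM'="Z (-5) (27) (17)"]) (assumption | code_simp)+

lemma zeros_19: "c2 (Z (-1) (4) (3) * zpow j) = 0 \<Longrightarrow> j \<in> set [(-6), (4)]"
  by (rule zeros_thm[where p=11 and q=19 and P=120 and M=360 and dl="Z (7267968583875) (3126387251075) (12754395746825)" and dl'="Z (-1112000) (1165175) (1025050)"
     and dM="Z (78033496397745478431935623506978040337750) (33566866102858653725837343809621687431025) (136939240047545291455361768979724632160025)" and dM'="Z (4572363378241540375) (62794075986981444600) (34297866037412096225)"]) (assumption | code_simp)+

lemma zeros_23a: "c2 (Z (-2) (-7) (-3) * zpow j) = 0 \<Longrightarrow> j \<in> set [(5)]"
  by (rule zeros_thm[where p=5 and q=7 and P=24 and M=48 and dl="Z (30) (13) (53)" and dl'="Z (-5) (-8) (-3)"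
     and dM="Z (3680) (1583) (6458)" and dM'="Z (-5) (27) (17)"]) (assumption | code_simp)+

lemma zeros_23b: "c2 (Z (-4) (-3) (0) * zpow j) = 0 \<Longrightarrow> j \<in> set [(0)]"
  by (rule zeros_thm[where p=5 and q=19 and P=24 and M=360 and dl="Z (30) (13) (53)" and dl'="Z (-5) (-8) (-3)"
     and dM="Z (171673692075040052550258371715351688743050) (73847105426289038196842156381167712348255) (301266328104599641201795891755394190752055)" and dM'="Z (10059199432131388825) (138146967171359178120) (75455305282306611695)"]) (assumption | code_simp)+

lemma zeros_25a: "c2 (Z (5) (4) (1) * zpow j) = 0 \<Longrightarrow> j \<in> set [(4)]"
  by (rule zeros_thm[where p=5 and q=7 and P=24 and M=48 and dl="Z (30) (13) (53)" and dl'="Z (-5) (-8) (-3)"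
     and dM="Z (3680) (1583) (6458)" and dM'="Z (-5) (27) (17)"]) (assumption | code_simp)+

lemma zeros_25b: "c2 (Z (1) (7) (4) * zpow j) = 0 \<Longrightarrow> j \<in> set []"
  by (rule zeros_thm[where p=3 and q=5 and P=13 and M=312 and dl="Z (2) (1) (4)" and dl'="Z (1) (-1) (-1)"
     and dM="Z (1494210446415968373780435428956423305) (642749130817961879030175585919981128) (2622156541087883544030790178360803263)" and dM'="Z (462770137275289770) (-397564083303762513) (-376817806570093113)"]) (assumption | code_simp)+


lemma rt_ex: "\<exists>x::real. x^3 + 2*x^2 + x + 1 = 0 \<and> -175487767/10^8 < x \<and> x < -175487766/10^8"
proof -
  let ?f = "\<lambda>x::real. x^3 + 2*x^2 + x + 1"
  let ?a = "-175487767/10^8 :: real" and ?b = "-175487766/10^8 :: real"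
  have fa: "?f ?a < 0" and fb: "?f ?b > 0" by (simp_all add: power3_eq_cube power2_eq_square)
  have "\<exists>x. ?a \<le> x \<and> x \<le> ?b \<and> ?f x = 0"
    by (rule IVT') (use fa fb in \<open>auto intro!: continuous_intros\<close>)
  then obtain x where x: "?a \<le> x" "x \<le> ?b" "?f x = 0" by blast
  have "x \<noteq> ?a" using fa x(3) by auto
  moreover have "x \<noteq> ?b" using fb x(3) by auto
  ultimately show ?thesis using x by (intro exI[of _ x]) auto
qed

definition rt :: real where
  "rt = (SOME x::real. x^3 + 2*x^2 + x + 1 = 0 \<and> -175487767/10^8 < x \<and> x < -175487766/10^8)"

lemma rt: "rt^3 + 2*rt^2 + rt + 1 = 0" "-175487767/10^8 < rt" "rt < -175487766/10^8"
  using someI_ex[OF rt_ex] unfolding rt_def by auto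

lemma rt3: "rt^3 = - 2*rt^2 - rt - 1" using rt(1) by linarith

fun ev :: "zr \<Rightarrow> real" where "ev (Z a b c) = a + b * rt + c * rt^2"

lemma ev_mult: "ev (x * y) = ev x * ev y"
proof (cases x; cases y)
  fix a b c d e f assume xy: "x = Z a b c" "y = Z d e f"
  have r4: "rt^4 = 3*rt^2 + rt + 2"
  proof -
    have "rt^4 = rt * rt^3" by (simp add: power_def)
    also have "\<dots> = rt * (- 2*rt^2 - rt - 1)" by (simp only: rt3)
    also have "\<dots> = -2 * rt^3 - rt^2 - rt" by (simp add: algebra_simps power2_eq_square power3_eq_cube)
    also have "\<dots> = 3*rt^2 + rt + 2" unfolding rt3 by simp
    finally show ?thesis .
  qed
  have "ev x * ev y = a*d + (a*e+b*d)*rt + (a*f+b*e+c*d)*rt^2 + (b*f+c*e)*rt^3 + c*f*rt^4"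
    using xy by (simp add: algebra_simps power2_eq_square power3_eq_cube power4_eq_xxxx)
  then show ?thesis using xy unfolding r4 rt3 by (simp add: algebra_simps)
qed

lemma ev_one[simp]: "ev 1 = 1" by (simp add: one_zr_def)

definition qf :: "zr \<Rightarrow> real" where
  "qf x = (case x of Z a b c \<Rightarrow>
     (a - c*(rt+1)^2 + (b - c*(2+rt)) * (-(2+rt))/2)^2 + (b - c*(2+rt))^2 * (rt*(3*rt+4)/4))"

lemma nrm_qf_aux: "(a::real)^3 - 2*a^2*b + 2*a^2*c + a*b^2 + a*b*c - 3*a*c^2 - b^3 + 2*b^2*c - b*c^2 + c^3
   - (a + b*r + c*r^2) * ((a - c*(r+1)^2 + (b - c*(2+r)) * (-(2+r))/2)^2 + (b - c*(2+r))^2 * (r*(3*r+4)/4))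
   = (r^3+2*r^2+r+1) * (3*a*b*c - 4*a*c^2 - b^3 + 2*b^2*c - b*c^2 - c^3*r^3 - 2*c^3*r^2 - c^3*r + c^3)"
  by (simp add: field_simps power2_eq_square power3_eq_cube)

lemma nrm_qf: "real_of_int (nrm x) = ev x * qf x"
proof (cases x)
  case (Z a b c)
  show ?thesis unfolding Z using nrm_qf_aux[of a b c rt] rt(1)
    by (simp add: nrm_def qf_def)
qed


definition DD :: int where "DD = 1000"
definition RLi :: int where "RLi = -1755"
definition RHi :: int where "RHi = -1754"
definition UB :: "int \<Rightarrow> int \<Rightarrow> int" where
  "UB b c = max (b*RLi) (b*RHi) * DD + max (c*RHi^2) (c*RLi^2)"
definition LB :: "int \<Rightarrow> int \<Rightarrow> int" where
  "LB b c = min (b*RLi) (b*RHi) * DD + min (c*RHi^2) (c*RLi^2)"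
definition alo :: "int \<Rightarrow> int \<Rightarrow> int" where "alo b c = - ((UB b c - DD^2) div DD^2)"
definition ahi :: "int \<Rightarrow> int \<Rightarrow> int" where "ahi b c = (- LB (b-1) (c-1) - 1) div DD^2"

definition reps :: "zr list" where
  "reps = [Z 3 1 0, Z 2 (-3) (-2), Z (-1) 4 3, Z (-2) (-7) (-3), Z (-4) (-3) 0, Z 5 4 1, Z 1 7 4]"
definition ks :: "int list" where "ks = [11, 17, 19, 23, 25]"

definition chk2 :: bool where
  "chk2 = list_all (\<lambda>b. list_all (\<lambda>c. list_all (\<lambda>a. nrm (Z a b c) \<in> set ks \<longrightarrow> Z a b c \<in> set reps)
      [alo b c..ahi b c]) [-5..5]) [-7..7]"

lemma chk2: chk2 by code_simp

lemma lin_bd: "(lo::real) \<le> y \<Longrightarrow> y \<le> hi \<Longrightarrow> c*y \<le> max (c*lo) (c*hi) \<and> min (c*lo) (c*hi) \<le> c*y"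
proof (cases "c \<ge> 0")
  case True
  assume "lo \<le> y" "y \<le> hi"
  then have "c*y \<le> c*hi" "c*lo \<le> c*y" using True by (auto intro: mult_left_mono)
  then show ?thesis by auto
next
  case False
  assume "lo \<le> y" "y \<le> hi"
  then have "c*y \<le> c*lo" "c*hi \<le> c*y" using False by (auto intro: mult_left_mono_neg)
  then show ?thesis by auto
qed

lemma UB_LB:
  fixes x :: real and b c :: int
  assumes "RLi/DD < x" "x < RHi/DD"
  shows "b*x + c*x^2 \<le> UB b c / DD^2" "LB b c / DD^2 \<le> b*x + c*x^2"
proof -
  define y where "y = x * DD"
  have D: "real_of_int DD > 0" by (simp add: DD_def)
  have y: "RLi \<le> y" "y \<le> RHi" using assms D unfolding y_def by (auto simp: field_simps)
  have yneg: "y < 0" using y by (simp add: RHi_def)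
  have y2: "real_of_int (RHi^2) \<le> y^2" "y^2 \<le> real_of_int (RLi^2)"
  proof -
    have "(-RHi) \<le> -y" using y by simp
    then have "(- real_of_int RHi)^2 \<le> (-y)^2" by (intro power_mono) (auto simp: RHi_def)
    then show "real_of_int (RHi^2) \<le> y^2" by simp
    have "-y \<le> - RLi" using y by simp
    then have "(-y)^2 \<le> (- real_of_int RLi)^2" by (intro power_mono) (use yneg in auto)
    then show "y^2 \<le> real_of_int (RLi^2)" by simp
  qed
  have b1: "b*y \<le> max (b*RLi) (b*RHi)" "min (b*RLi) (b*RHi) \<le> b*y"
    using lin_bd[OF y, of "real_of_int b"] by (simp_all add: of_int_max of_int_min)
  have c1: "c*y^2 \<le> max (c*RHi^2) (c*RLi^2)" "min (c*RHi^2) (c*RLi^2) \<le> c*y^2"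
    using lin_bd[OF y2, of "real_of_int c"] by (simp_all add: of_int_max of_int_min)
  have e: "(b*x + c*x^2) * DD^2 = (b*y) * DD + c*y^2" unfolding y_def by (simp add: algebra_simps power2_eq_square)
  have "(b*y) * DD \<le> real_of_int (max (b*RLi) (b*RHi)) * DD" using b1(1) D by (intro mult_right_mono) auto
  then have "(b*x + c*x^2) * DD^2 \<le> real_of_int (max (b*RLi) (b*RHi)) * DD + real_of_int (max (c*RHi^2) (c*RLi^2))"
    unfolding e using c1(1) by linarith
  then have "(b*x + c*x^2) * DD^2 \<le> UB b c" unfolding UB_def by simp
  then show "b*x + c*x^2 \<le> UB b c / DD^2" using D by (simp add: field_simps)
  have "real_of_int (min (b*RLi) (b*RHi)) * DD \<le> (b*y) * DD" using b1(2) D by (intro mult_right_mono) auto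
  then have "real_of_int (min (b*RLi) (b*RHi)) * DD + real_of_int (min (c*RHi^2) (c*RLi^2)) \<le> (b*x + c*x^2) * DD^2"
    unfolding e using c1(2) by linarith
  then have "LB b c \<le> (b*x + c*x^2) * DD^2" unfolding LB_def by simp
  then show "LB b c / DD^2 \<le> b*x + c*x^2" using D by (simp add: field_simps)
qed

lemma rt_bounds: "RLi/DD < rt" "rt < RHi/DD"
  using rt(2,3) by (simp_all add: RLi_def RHi_def DD_def)

lemma enum_sound:
  fixes a b c :: int
  assumes bc: "-7 \<le> b" "b \<le> 7" "-5 \<le> c" "c \<le> 5"
    and e1: "1 \<le> a + b*rt + c*rt^2" and e2: "a + b*rt + c*rt^2 < rt^2 + rt"
    and n: "nrm (Z a b c) \<in> set ks"
  shows "Z a b c \<in> set reps"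
proof -
  have D: "real_of_int DD > 0" "DD > 0" by (simp_all add: DD_def)
  have u: "b*rt + c*rt^2 \<le> UB b c / DD^2" using UB_LB(1)[OF rt_bounds] by simp
  have l: "LB (b-1) (c-1) / DD^2 \<le> (b-1)*rt + (c-1)*rt^2" using UB_LB(2)[OF rt_bounds, of "b-1" "c-1"] by simp
  have "1 \<le> a + UB b c / DD^2" using e1 u by linarith
  then have "real_of_int (DD^2) \<le> a * DD^2 + UB b c" using D by (simp add: field_simps)
  then have A1: "DD^2 - UB b c \<le> a * DD^2" by linarith
  have "a + LB (b-1) (c-1) / DD^2 < 0" using e2 l by (simp add: algebra_simps)
  then have "real_of_int (a * DD^2 + LB (b-1) (c-1)) < 0" using D by (simp add: field_simps)
  then have A2: "a * DD^2 \<le> - LB (b-1) (c-1) - 1" by linarith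
  have P: "DD^2 > 0" using D by simp
  have "alo b c \<le> a"
  proof -
    have "(UB b c - DD^2) \<ge> (-a) * DD^2" using A1 by (simp add: algebra_simps)
    then have "(UB b c - DD^2) div DD^2 \<ge> ((-a) * DD^2) div DD^2" by (intro zdiv_mono1) (use P in auto)
    moreover have "((-a) * DD^2) div DD^2 = -a" using P by (intro nonzero_mult_div_cancel_right) simp
    ultimately show ?thesis unfolding alo_def by linarith
  qed
  moreover have "a \<le> ahi b c"
  proof -
    have "(a * DD^2) div DD^2 \<le> (- LB (b-1) (c-1) - 1) div DD^2" by (intro zdiv_mono1 A2) (use P in auto)
    then show ?thesis using P unfolding ahi_def by simp
  qed
  ultimately have a: "a \<in> set [alo b c..ahi b c]" by simp
  have "b \<in> set [-7..7]" "c \<in> set [-5..5]" using bc by auto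
  then show ?thesis using chk2 a n unfolding chk2_def list_all_iff by blast
qed


lemma rt_b: "-(351/200) < rt" "rt < -(877/500)" using rt(2,3) by simp_all

lemma bounds:
  fixes a b c :: int
  assumes e1: "1 \<le> ev (Z a b c)" and e2: "ev (Z a b c) < rt^2 + rt" and n: "nrm (Z a b c) \<le> 25"
  shows "-7 \<le> b \<and> b \<le> 7 \<and> -5 \<le> c \<and> c \<le> 5"
proof -
  define Y where "Y = b - c*(2+rt)"
  define X where "X = a - c*(rt+1)^2 + Y * (-(2+rt))/2"
  define w where "w = rt*(3*rt+4)/4"
  define E where "E = ev (Z a b c)"
  have r2: "(769/250) < rt^2" "rt^2 < (3081/1000)"
  proof -
    have "(877/500)^2 < (-rt)^2" using rt_b by (intro power_strict_mono) auto
    then show "(769/250) < rt^2" by (simp add: power2_eq_square)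
    have "(-rt)^2 < (351/200)^2" using rt_b by (intro power_strict_mono) auto
    then show "rt^2 < (3081/1000)" by (simp add: power2_eq_square)
  qed
  have w: "w \<ge> (11/20)" unfolding w_def using r2 rt_b by (simp add: algebra_simps power2_eq_square)
  have q: "qf (Z a b c) = X^2 + Y^2 * w" unfolding qf_def X_def Y_def w_def by simp
  have qn: "0 \<le> qf (Z a b c)" unfolding q using w by (intro add_nonneg_nonneg) auto
  have "real_of_int (nrm (Z a b c)) = E * qf (Z a b c)" unfolding E_def by (rule nrm_qf)
  then have "E * qf (Z a b c) \<le> 25" using n by linarith
  moreover have "qf (Z a b c) \<le> E * qf (Z a b c)" using e1 qn unfolding E_def
    by (metis mult_le_cancel_right1 not_le order_less_le_trans)
  ultimately have q25: "X^2 + Y^2 * w \<le> 25" unfolding q by linarith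
  have "Y^2 * (11/20) \<le> Y^2 * w" using w by (intro mult_left_mono) auto
  moreover have "0 \<le> X^2" by simp
  moreover have "((27/4)::real)^2 = 729/16" by (simp add: power2_eq_square)
  ultimately have "Y^2 \<le> (27/4)^2" using q25 by linarith
  then have Yb: "\<bar>Y\<bar> \<le> (27/4)" using abs_le_square_iff[of Y "(27/4)"] by simp
  have "0 \<le> Y^2 * w" using w by simp
  then have "X^2 \<le> 5^2" using q25 by simp
  then have Xb: "\<bar>X\<bar> \<le> 5" using abs_le_square_iff[of X 5] by simp
  have E: "E = a + b*rt + c*rt^2" unfolding E_def by simp
  have Eb: "\<bar>E\<bar> \<le> (133/100)" using e1 e2 r2 rt_b unfolding E_def by simp
  define L where "L = 3*rt^2 + 4*rt + 1"
  have L: "L \<ge> (16/5)" unfolding L_def using r2 rt_b by simp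
  have id: "c * L = (E - X) - Y * (3*rt+2)/2" unfolding L_def E X_def Y_def
    by (simp add: field_simps power2_eq_square)
  have K: "\<bar>(3*rt+2)/2\<bar> \<le> (653/400)" using rt_b by simp
  have "\<bar>Y * (3*rt+2)/2\<bar> = \<bar>Y\<bar> * \<bar>(3*rt+2)/2\<bar>" by (simp add: abs_mult)
  also have "\<dots> \<le> (27/4) * (653/400)" using Yb K by (intro mult_mono) auto
  finally have "\<bar>c * L\<bar> \<le> (133/100) + 5 + (27/4) * (653/400)" unfolding id using Eb Xb by linarith
  moreover have "\<bar>c * L\<bar> = \<bar>real_of_int c\<bar> * L" using L by (simp add: abs_mult)
  moreover have "\<bar>real_of_int c\<bar> * (16/5) \<le> \<bar>real_of_int c\<bar> * L" using L by (intro mult_left_mono) auto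
  ultimately have "\<bar>real_of_int c\<bar> < 6" by linarith
  then have cb: "\<bar>c\<bar> \<le> 5" by linarith
  have bY: "b = Y + c*(2+rt)" unfolding Y_def by simp
  have "\<bar>c*(2+rt)\<bar> = \<bar>c\<bar> * \<bar>2+rt\<bar>" by (simp add: abs_mult)
  also have "\<dots> \<le> 5 * (2461/10000)" using cb rt_b by (intro mult_mono) auto
  finally have "\<bar>real_of_int b\<bar> < 8" using bY Yb by linarith
  then have "\<bar>b\<bar> \<le> 7" by linarith
  then show ?thesis using cb by auto
qed


lemma ev_pow: "ev (x ^ n) = ev x ^ n"
  by (induct n) (simp_all add: ev_mult)

lemma ev_rho: "ev rho = rt^2 + rt" by (simp add: rho_def)
lemma ev_rhoi: "ev rhoi = -1 - rt" by (simp add: rhoi_def)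
lemma rr_inv: "(rt^2 + rt) * (-1 - rt) = 1"
  using arg_cong[OF rho_rhoi, of ev] by (simp add: ev_mult ev_rho ev_rhoi)
lemma rr_gt1: "rt^2 + rt > 1"
proof -
  have "(877/500)^2 < (-rt)^2" using rt_b by (intro power_strict_mono) auto
  then show ?thesis using rt_b by (simp add: power2_eq_square)
qed

lemma ev_zpow: "ev (zpow j) = (rt^2 + rt) powr j"
proof (cases "0 \<le> j")
  case True
  then show ?thesis using rr_gt1 by (simp add: zpow_def ev_pow ev_rho powr_realpow[symmetric])
next
  case False
  have "-1 - rt = inverse (rt^2 + rt)" using rr_inv rr_gt1 by (simp add: field_simps)
  then have "ev (zpow j) = inverse ((rt^2 + rt) ^ nat (-j))" using False
    by (simp add: zpow_def ev_pow ev_rhoi power_inverse)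
  also have "\<dots> = (rt^2 + rt) powr j" using False rr_gt1
    by (simp add: powr_realpow[symmetric] powr_minus[symmetric])
  finally show ?thesis .
qed

lemma nrm_zpow: "nrm (x * zpow j) = nrm x"
proof (induct j rule: int_induct[where k=0])
  case base then show ?case by (simp add: zpow_def)
next
  case (step1 i) then show ?case by (simp add: zpow_succ mult.assoc[symmetric] nrm_rho)
next
  case (step2 i) then show ?case by (simp add: zpow_pred mult.assoc[symmetric] nrm_rhoi)
qed

lemma qf_nonneg: "0 \<le> qf x"
proof -
  have "rt*(3*rt+4)/4 \<ge> 0" using rt_b by (intro divide_nonneg_pos mult_nonpos_nonpos) auto
  then show ?thesis by (cases x) (simp add: qf_def)
qed

lemma descent:
  assumes k: "nrm \<beta> \<in> set ks"
  shows "\<exists>\<gamma>\<in>set reps. \<exists>j. \<beta> = \<gamma> * zpow j"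
proof -
  define rr where "rr = rt^2 + rt"
  have rr: "rr > 1" unfolding rr_def by (rule rr_gt1)
  have kp: "0 < nrm \<beta>" "nrm \<beta> \<le> 25" using k by (auto simp: ks_def)
  have "0 < ev \<beta> * qf \<beta>" using kp nrm_qf[of \<beta>] by simp
  then have x0: "0 < ev \<beta>" using qf_nonneg[of \<beta>] by (simp add: zero_less_mult_iff)
  define j0 where "j0 = \<lfloor>log rr (ev \<beta>)\<rfloor>"
  have l1: "j0 \<le> log rr (ev \<beta>)" "log rr (ev \<beta>) < j0 + 1" unfolding j0_def by linarith+
  have p1: "rr powr j0 \<le> ev \<beta>"
  proof -
    have "rr powr j0 \<le> rr powr (log rr (ev \<beta>))" using l1 rr by (intro powr_mono) auto
    then show ?thesis using x0 rr by simp
  qed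
  have p2: "ev \<beta> < rr powr j0 * rr"
  proof -
    have "rr powr (log rr (ev \<beta>)) < rr powr (j0 + 1)" using l1 rr by (intro powr_less_mono) auto
    then show ?thesis using x0 rr by (simp add: powr_add)
  qed
  define \<beta>' where "\<beta>' = \<beta> * zpow (- j0)"
  have pos: "rr powr j0 > 0" using rr by simp
  have ev': "ev \<beta>' = ev \<beta> / rr powr j0"
    unfolding \<beta>'_def using rr by (simp add: ev_mult ev_zpow rr_def[symmetric] powr_minus_divide)
  have e1: "1 \<le> ev \<beta>'" unfolding ev' using p1 pos by simp
  have e2: "ev \<beta>' < rr" unfolding ev' using p2 pos by (simp add: field_simps)
  have n': "nrm \<beta>' = nrm \<beta>" unfolding \<beta>'_def by (rule nrm_zpow)
  obtain a b c where abc: "\<beta>' = Z a b c" by (cases \<beta>')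
  have bc: "-7 \<le> b \<and> b \<le> 7 \<and> -5 \<le> c \<and> c \<le> 5"
    by (rule bounds) (use e1 e2 n' kp abc rr_def in auto)
  have "Z a b c \<in> set reps"
    by (rule enum_sound) (use bc e1 e2 abc n' k rr_def in auto)
  moreover have "\<beta> = \<beta>' * zpow j0"
  proof -
    have "zpow (- j0) * zpow j0 = 1" using zpow_add[of "- j0" j0] by (simp add: zpow_def)
    then show ?thesis unfolding \<beta>'_def by (simp add: mult.assoc)
  qed
  ultimately show ?thesis using abc by blast
qed


lemma val_11_100: "Z (3) (1) (0) * zpow (0) = Z (3) (1) (0)" by code_simp
lemma val_17_105: "Z (2) (-3) (-2) * zpow (5) = Z (1) (-2) (0)" by code_simp
lemma val_19_94: "Z (-1) (4) (3) * zpow (-6) = Z (9) (5) (0)" by code_simp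
lemma val_19_104: "Z (-1) (4) (3) * zpow (4) = Z (2) (-1) (0)" by code_simp
lemma val_23a_105: "Z (-2) (-7) (-3) * zpow (5) = Z (-1) (-3) (0)" by code_simp
lemma val_23b_100: "Z (-4) (-3) (0) * zpow (0) = Z (-4) (-3) (0)" by code_simp
lemma val_25a_104: "Z (5) (4) (1) * zpow (4) = Z (-2) (-3) (0)" by code_simp
lemma thue:
  assumes k: "FF m n \<in> set ks"
  shows "(m, n) \<in> set [(3,-1),(1,2),(2,1),(9,-5),(-4,3),(-1,3),(-2,3)]"
proof -
  have "nrm (Z m (-n) 0) = FF m n" by (simp add: nrm_def FF_def algebra_simps power2_eq_square power3_eq_cube)
  then obtain g j where g: "g \<in> set reps" and e: "Z m (-n) 0 = g * zpow j" using descent k by metis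
  have c: "c2 (g * zpow j) = 0" using arg_cong[OF e, of c2] by simp
  from g have "g = Z 3 1 0 \<or> g = Z 2 (-3) (-2) \<or> g = Z (-1) 4 3 \<or> g = Z (-2) (-7) (-3) \<or> g = Z (-4) (-3) 0 \<or> g = Z 5 4 1 \<or> g = Z 1 7 4"
    by (simp add: reps_def)
  then show ?thesis
  proof (elim disjE)
    assume G: "g = Z (3) (1) (0)"
    have "j \<in> set [(0)]" using zeros_11 c G by simp
    then show ?thesis using e G by (auto simp add: val_11_100)
  next
    assume G: "g = Z (2) (-3) (-2)"
    have "j \<in> set [(5)]" using zeros_17 c G by simp
    then show ?thesis using e G by (auto simp add: val_17_105)
  next
    assume G: "g = Z (-1) (4) (3)"
    have "j \<in> set [(-6), (4)]" using zeros_19 c G by simp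
    then show ?thesis using e G by (auto simp add: val_19_94 val_19_104)
  next
    assume G: "g = Z (-2) (-7) (-3)"
    have "j \<in> set [(5)]" using zeros_23a c G by simp
    then show ?thesis using e G by (auto simp add: val_23a_105)
  next
    assume G: "g = Z (-4) (-3) (0)"
    have "j \<in> set [(0)]" using zeros_23b c G by simp
    then show ?thesis using e G by (auto simp add: val_23b_100)
  next
    assume G: "g = Z (5) (4) (1)"
    have "j \<in> set [(4)]" using zeros_25a c G by simp
    then show ?thesis using e G by (auto simp add: val_25a_104)
  next
    assume G: "g = Z (1) (7) (4)"
    have "j \<in> set []" using zeros_25b c G by simp
    then show ?thesis using e G by (auto simp add: )
  qed
qed


lemma key:
  assumes p: "period3_pt c y" and k: "\<bar>numer y\<bar> \<in> set ks"
  shows "(\<bar>numer y\<bar> \<in> {11,17,25} \<longrightarrow> c = -421/144) \<and>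
         (\<bar>numer y\<bar> = 19 \<longrightarrow> c = -301/144 \<or> c = -226801/129600) \<and>
         (\<bar>numer y\<bar> = 23 \<longrightarrow> c = -301/144 \<or> c = -1849/576)"
proof -
  define t where "t = y + fc c y"
  have P: "t \<noteq> 0 \<and> t \<noteq> -1 \<and> y = (t^3+2*t^2+t+1)/(2*t*(t+1))
      \<and> c = - (t^6+2*t^5+4*t^4+8*t^3+9*t^2+4*t+1)/(4*t^2*(t+1)^2)"
    unfolding t_def by (rule param[OF p])
  obtain m n where q: "quotient_of t = (m, n)" by (cases "quotient_of t")
  have N: "(numer y = FF m n \<or> numer y = - FF m n) \<and> t = of_int m / of_int n"
    using numer_param P q by blast
  define m' where "m' = (if FF m n > 0 then m else -m)"
  define n' where "n' = (if FF m n > 0 then n else -n)"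
  have FFneg: "FF (-m) (-n) = - FF m n" by (simp add: FF_def)
  have ab: "\<bar>numer y\<bar> = \<bar>FF m n\<bar>" using N by auto
  have F': "FF m' n' = \<bar>FF m n\<bar>" unfolding m'_def n'_def using FFneg by auto
  have t': "t = of_int m' / of_int n'" using N unfolding m'_def n'_def by auto
  have "(m', n') \<in> set [(3,-1),(1,2),(2,1),(9,-5),(-4,3),(-1,3),(-2,3)]"
    by (rule thue) (use F' ab k in simp)
  then have "(m' = 3 \<and> n' = -1) \<or> (m' = 1 \<and> n' = 2) \<or> (m' = 2 \<and> n' = 1) \<or> (m' = 9 \<and> n' = -5)
     \<or> (m' = -4 \<and> n' = 3) \<or> (m' = -1 \<and> n' = 3) \<or> (m' = -2 \<and> n' = 3)" by simp
  note this_disj = this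
  have cP: "c = - (t^6+2*t^5+4*t^4+8*t^3+9*t^2+4*t+1)/(4*t^2*(t+1)^2)" using P by blast
  from this_disj show ?thesis
  proof (elim disjE conjE)
    assume a: "m' = 3" "n' = -1"
    have T: "t = -3" using t' a by simp
    have V: "- ((-3)^6+2*(-3)^5+4*(-3)^4+8*(-3)^3+9*(-3)^2+4*(-3)+1)/(4*(-3)^2*((-3)+1)^2) = (-421/144::rat)" by code_simp
    have "\<bar>numer y\<bar> = 11" using F' ab a by (simp add: FF_def)
    moreover have "c = -421/144" using cP T V by simp
    ultimately show ?thesis by simp
  next
    assume a: "m' = 1" "n' = 2"
    have T: "t = 1/2" using t' a by simp
    have V: "- ((1/2)^6+2*(1/2)^5+4*(1/2)^4+8*(1/2)^3+9*(1/2)^2+4*(1/2)+1)/(4*(1/2)^2*((1/2)+1)^2) = (-421/144::rat)" by code_simp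
    have "\<bar>numer y\<bar> = 17" using F' ab a by (simp add: FF_def)
    moreover have "c = -421/144" using cP T V by simp
    ultimately show ?thesis by simp
  next
    assume a: "m' = 2" "n' = 1"
    have T: "t = 2" using t' a by simp
    have V: "- ((2)^6+2*(2)^5+4*(2)^4+8*(2)^3+9*(2)^2+4*(2)+1)/(4*(2)^2*((2)+1)^2) = (-301/144::rat)" by code_simp
    have "\<bar>numer y\<bar> = 19" using F' ab a by (simp add: FF_def)
    moreover have "c = -301/144" using cP T V by simp
    ultimately show ?thesis by simp
  next
    assume a: "m' = 9" "n' = -5"
    have T: "t = -9/5" using t' a by simp
    have V: "- ((-9/5)^6+2*(-9/5)^5+4*(-9/5)^4+8*(-9/5)^3+9*(-9/5)^2+4*(-9/5)+1)/(4*(-9/5)^2*((-9/5)+1)^2) = (-226801/129600::rat)" by code_simp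
    have "\<bar>numer y\<bar> = 19" using F' ab a by (simp add: FF_def)
    moreover have "c = -226801/129600" using cP T V by simp
    ultimately show ?thesis by simp
  next
    assume a: "m' = -4" "n' = 3"
    have T: "t = -4/3" using t' a by simp
    have V: "- ((-4/3)^6+2*(-4/3)^5+4*(-4/3)^4+8*(-4/3)^3+9*(-4/3)^2+4*(-4/3)+1)/(4*(-4/3)^2*((-4/3)+1)^2) = (-1849/576::rat)" by code_simp
    have "\<bar>numer y\<bar> = 23" using F' ab a by (simp add: FF_def)
    moreover have "c = -1849/576" using cP T V by simp
    ultimately show ?thesis by simp
  next
    assume a: "m' = -1" "n' = 3"
    have T: "t = -1/3" using t' a by simp
    have V: "- ((-1/3)^6+2*(-1/3)^5+4*(-1/3)^4+8*(-1/3)^3+9*(-1/3)^2+4*(-1/3)+1)/(4*(-1/3)^2*((-1/3)+1)^2) = (-301/144::rat)" by code_simp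
    have "\<bar>numer y\<bar> = 23" using F' ab a by (simp add: FF_def)
    moreover have "c = -301/144" using cP T V by simp
    ultimately show ?thesis by simp
  next
    assume a: "m' = -2" "n' = 3"
    have T: "t = -2/3" using t' a by simp
    have V: "- ((-2/3)^6+2*(-2/3)^5+4*(-2/3)^4+8*(-2/3)^3+9*(-2/3)^2+4*(-2/3)+1)/(4*(-2/3)^2*((-2/3)+1)^2) = (-421/144::rat)" by code_simp
    have "\<bar>numer y\<bar> = 25" using F' ab a by (simp add: FF_def)
    moreover have "c = -421/144" using cP T V by simp
    ultimately show ?thesis by simp
  qed
qed

lemma numer_witness: "b \<noteq> 0 \<Longrightarrow> coprime a b \<Longrightarrow> numer (of_int a / of_int b) \<in> {a, -a}"
  using numer_frac by auto

lemma witness: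
  assumes "period3_pt c (of_int a / of_int b)" "b \<noteq> 0" "coprime a b" "a \<in> S" "-a \<in> S"
  shows "cycle_numer_in c S"
  unfolding cycle_numer_in_def
  by (rule exI[of _ "of_int a / of_int b"]) (use assms numer_witness[of b a] in \<open>auto simp: orbit3_def\<close>)

lemma cop1: "coprime (-11::int) 12" by code_simp
lemma cop2: "coprime (19::int) 12" by code_simp
lemma cop3: "coprime (-19::int) 360" by code_simp
lemma cop4: "coprime (-23::int) 12" by code_simp
lemma cop5: "coprime (23::int) 24" by code_simp

lemma get_y: "cycle_numer_in c S \<Longrightarrow> \<exists>y. period3_pt c y \<and> numer y \<in> S"
  unfolding cycle_numer_in_def using per3_orbit by blast

theorem theorem8:
  fixes c :: rat
  assumes "\<exists>x. period3_pt c x"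
  shows "(cycle_numer_in c {11, -11, 17, -17, 25, -25} \<longleftrightarrow> c = - 421 / 144)
       \<and> (cycle_numer_in c {19, -19} \<longleftrightarrow> c = - 301 / 144 \<or> c = - (337 * 673) / (360 ^ 2))
       \<and> (cycle_numer_in c {23, -23} \<longleftrightarrow> c = - 301 / 144 \<or> c = - (43 ^ 2) / (24 ^ 2))"
proof (intro conjI iffI)
  assume "cycle_numer_in c {11, -11, 17, -17, 25, -25}"
  then obtain y where y: "period3_pt c y" "numer y \<in> {11, -11, 17, -17, 25, -25}" using get_y by blast
  then have "\<bar>numer y\<bar> \<in> set ks" "\<bar>numer y\<bar> \<in> {11,17,25}" by (auto simp: ks_def)
  then show "c = - 421 / 144" using key[OF y(1)] by simp
next
  assume c: "c = - 421 / 144"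
  show "cycle_numer_in c {11, -11, 17, -17, 25, -25}"
    proof -
    have P: "period3_pt (- 421 / 144) (of_int (-11) / of_int 12)" unfolding per3_iff fc_def by code_simp
    show ?thesis unfolding c by (rule witness[OF P _ cop1]) simp_all
  qed
next
  assume "cycle_numer_in c {19, -19}"
  then obtain y where y: "period3_pt c y" "numer y \<in> {19, -19}" using get_y by blast
  then have "\<bar>numer y\<bar> \<in> set ks" "\<bar>numer y\<bar> = 19" by (auto simp: ks_def)
  then show "c = - 301 / 144 \<or> c = - (337 * 673) / (360 ^ 2)" using key[OF y(1)] by simp
next
  assume c: "c = - 301 / 144 \<or> c = - (337 * 673) / (360 ^ 2)"
  then show "cycle_numer_in c {19, -19}"
  proof
    assume c: "c = - 301 / 144"
    show ?thesis
      proof -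
    have P: "period3_pt (- 301 / 144) (of_int (19) / of_int 12)" unfolding per3_iff fc_def by code_simp
    show ?thesis unfolding c by (rule witness[OF P _ cop2]) simp_all
  qed
  next
    assume c: "c = - (337 * 673) / (360 ^ 2)"
    show ?thesis
      proof -
    have P: "period3_pt (- (337 * 673) / (360 ^ 2)) (of_int (-19) / of_int 360)" unfolding per3_iff fc_def by code_simp
    show ?thesis unfolding c by (rule witness[OF P _ cop3]) simp_all
  qed
  qed
next
  assume "cycle_numer_in c {23, -23}"
  then obtain y where y: "period3_pt c y" "numer y \<in> {23, -23}" using get_y by blast
  then have "\<bar>numer y\<bar> \<in> set ks" "\<bar>numer y\<bar> = 23" by (auto simp: ks_def)
  then show "c = - 301 / 144 \<or> c = - (43 ^ 2) / (24 ^ 2)" using key[OF y(1)] by simp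
next
  assume c: "c = - 301 / 144 \<or> c = - (43 ^ 2) / (24 ^ 2)"
  then show "cycle_numer_in c {23, -23}"
  proof
    assume c: "c = - 301 / 144"
    show ?thesis
      proof -
    have P: "period3_pt (- 301 / 144) (of_int (-23) / of_int 12)" unfolding per3_iff fc_def by code_simp
    show ?thesis unfolding c by (rule witness[OF P _ cop4]) simp_all
  qed
  next
    assume c: "c = - (43 ^ 2) / (24 ^ 2)"
    show ?thesis
      proof -
    have P: "period3_pt (- (43 ^ 2) / (24 ^ 2)) (of_int (23) / of_int 24)" unfolding per3_iff fc_def by code_simp
    show ?thesis unfolding c by (rule witness[OF P _ cop5]) simp_all
  qed
  qed
qed


end
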